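(* Let $q$ be a prime power, $M\geq2$ an integer, $k\geq 1$, and let $f\in\mathbb{F}_q[x]$ be a SRIM polynomial of degree $2k$. Let $C_f\in\mathrm{Sp}(2k,q)$ be an element with characteristic polynomial $f$, and suppose $\alpha\in\mathrm{Sp}(2k,q)$ satisfies $\alpha^M=C_f$. Then $f(x^M)$ has a SRIM factor of degree $2k$.
   Context: For a monic polynomial $f$ of degree $r$ with $f(0)\neq0$, $f^*(x)=f(0)^{-1}x^rf(x^{-1})$; $f$ is self-reciprocal if $f=f^*$. SRIM means self-reciprocal irreducible monic. $\mathrm{Sp}(2k,q)$ is the symplectic group of a non-degenerate alternating form on $\mathbb{F}_q^{2k}$. *)

theory Defs
  imports "HOL-Computational_Algebra.Polynomial" "Jordan_Normal_Form.Char_Poly"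
begin

definition reciprocal_poly :: "'a::field poly \<Rightarrow> 'a poly" where
  "reciprocal_poly f = Polynomial.smult (inverse (coeff f 0)) (reflect_poly f)"

definition self_reciprocal :: "'a::field poly \<Rightarrow> bool" where
  "self_reciprocal f \<longleftrightarrow> coeff f 0 \<noteq> 0 \<and> reciprocal_poly f = f"

definition SRIM :: "'a::field poly \<Rightarrow> bool" where
  "SRIM f \<longleftrightarrow> monic f \<and> irreducible f \<and> self_reciprocal f"

text \<open>Gram matrix J of a non-degenerate alternating bilinear form (u,v) |-> u^T J v on K^n.\<close>
definition nondeg_alternating :: "nat \<Rightarrow> 'a::field mat \<Rightarrow> bool" where
  "nondeg_alternating n J \<longleftrightarrow> J \<in> carrier_mat n n \<and> transpose_mat J = - J
     \<and> (\<forall>i<n. J $$ (i, i) = 0) \<and> det J \<noteq> 0"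

definition symplectic_group :: "nat \<Rightarrow> 'a::field mat \<Rightarrow> 'a mat set" where
  "symplectic_group n J = {A \<in> carrier_mat n n. transpose_mat A * J * A = J}"

end

theory Submission
  imports Defs
begin

definition meval :: "'a::comm_ring_1 mat \<Rightarrow> 'a poly \<Rightarrow> 'a mat" where
  "meval A p = fold_coeffs (\<lambda>a M. a \<cdot>\<^sub>m 1\<^sub>m (dim_row A) + A * M) p (0\<^sub>m (dim_row A) (dim_row A))"

lemma meval_0[simp]: "meval A 0 = 0\<^sub>m (dim_row A) (dim_row A)"
  by (simp add: meval_def)

lemma meval_pCons:
  assumes A: "A \<in> carrier_mat n n"
  shows "meval A (pCons a p) = a \<cdot>\<^sub>m 1\<^sub>m n + A * meval A p"
proof (cases "p = 0 \<and> a = 0")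
  case True
  then show ?thesis using A by (auto simp: right_mult_zero_mat[OF A])
next
  case False
  then have "coeffs (pCons a p) = a # coeffs p" by (auto simp: cCons_def)
  then show ?thesis using A unfolding meval_def fold_coeffs_def by simp
qed

lemma meval_carrier[simp]:
  assumes A: "A \<in> carrier_mat n n" shows "meval A p \<in> carrier_mat n n"
  using A by (induction p rule: pCons_induct) (auto simp: meval_pCons)

lemma meval_const[simp]:
  assumes A: "A \<in> carrier_mat n n" shows "meval A [:a:] = a \<cdot>\<^sub>m 1\<^sub>m n"
  using A by (simp add: meval_pCons right_mult_zero_mat[OF A])

lemma add4: fixes P :: "'a::comm_ring_1 mat" shows "P \<in> carrier_mat n m \<Longrightarrow> Q \<in> carrier_mat n m \<Longrightarrow> R \<in> carrier_mat n m \<Longrightarrow> S \<in> carrier_mat n m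
  \<Longrightarrow> (P + R) + (Q + S) = (P + Q) + (R + S)"
  by (rule eq_matI) (auto simp: ac_simps)

lemma meval_add:
  assumes A: "A \<in> carrier_mat n n" shows "meval A (p + q) = meval A p + meval A q"
proof (induction p arbitrary: q rule: pCons_induct)
  case 0 then show ?case using A by simp
next
  case (pCons a p)
  obtain b q' where q: "q = pCons b q'" by (cases q)
  have "meval A (pCons a p + q) = (a + b) \<cdot>\<^sub>m 1\<^sub>m n + A * (meval A p + meval A q')"
    using pCons A by (simp add: q meval_pCons)
  also have "\<dots> = (a \<cdot>\<^sub>m 1\<^sub>m n + A * meval A p) + (b \<cdot>\<^sub>m 1\<^sub>m n + A * meval A q')"
    unfolding mult_add_distrib_mat[OF A meval_carrier[OF A] meval_carrier[OF A]] add_smult_distrib_right_mat[OF one_carrier_mat]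
    by (rule add4[of _ n n]) (use A in auto)
  finally show ?case using A by (simp add: q meval_pCons)
qed

lemma smult_smult_mat: "a \<cdot>\<^sub>m (b \<cdot>\<^sub>m (X::'a::comm_ring_1 mat)) = (a * b) \<cdot>\<^sub>m X"
  by (rule eq_matI) auto

lemma smult_zero_left_mat: "X \<in> carrier_mat n m \<Longrightarrow> (0::'a::comm_ring_1) \<cdot>\<^sub>m X = 0\<^sub>m n m"
  by (rule eq_matI) auto

lemma smult_one_left_mat: "(1::'a::comm_ring_1) \<cdot>\<^sub>m X = X"
  by (rule eq_matI) auto

lemma meval_smult:
  assumes A: "A \<in> carrier_mat n n" shows "meval A (Polynomial.smult c p) = c \<cdot>\<^sub>m meval A p"
proof (induction p rule: pCons_induct)
  case 0 then show ?case using A by simp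
next
  case (pCons a p)
  have "meval A (Polynomial.smult c (pCons a p)) = (c * a) \<cdot>\<^sub>m 1\<^sub>m n + A * (c \<cdot>\<^sub>m meval A p)"
    using pCons A by (simp add: meval_pCons)
  also have "\<dots> = c \<cdot>\<^sub>m (a \<cdot>\<^sub>m 1\<^sub>m n + A * meval A p)"
    using A by (simp add: mult_smult_distrib[OF A meval_carrier[OF A]] add_smult_distrib_left_mat[of _ n n] smult_smult_mat)
  finally show ?case using A by (simp add: meval_pCons)
qed

lemma meval_pCons0:
  assumes A: "A \<in> carrier_mat n n" shows "meval A (pCons 0 p) = A * meval A p"
  using A by (simp add: meval_pCons smult_zero_left_mat[of _ n n])

lemma meval_mult:
  assumes A: "A \<in> carrier_mat n n" shows "meval A (p * q) = meval A p * meval A q"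
proof (induction p rule: pCons_induct)
  case 0 then show ?case using A by (simp add: left_mult_zero_mat[OF meval_carrier[OF A]])
next
  case (pCons a p)
  have "meval A (pCons a p * q) = a \<cdot>\<^sub>m meval A q + A * (meval A p * meval A q)"
    using pCons A by (simp add: meval_add meval_smult meval_pCons0)
  also have "\<dots> = (a \<cdot>\<^sub>m 1\<^sub>m n + A * meval A p) * meval A q"
    using A by (simp add: add_mult_distrib_mat[of _ n n _ _ n] mult_smult_assoc_mat[of _ n n _ n]
       left_mult_one_mat[of _ n n] assoc_mult_mat[OF A meval_carrier[OF A] meval_carrier[OF A]])
  finally show ?case using A by (simp add: meval_pCons)
qed

lemma meval_one[simp]:
  assumes A: "A \<in> carrier_mat n n" shows "meval A 1 = 1\<^sub>m n"
  using meval_const[OF A, of 1] by (simp add: one_pCons smult_one_left_mat)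

lemma pow_mat_commute:
  assumes A: "A \<in> carrier_mat n n" shows "A * A ^\<^sub>m k = A ^\<^sub>m k * A"
proof (induction k)
  case 0 then show ?case using A by (simp add: left_mult_one_mat right_mult_one_mat)
next
  case (Suc k)
  have "A * A ^\<^sub>m Suc k = (A * A ^\<^sub>m k) * A" using A by (simp add: assoc_mult_mat[OF A pow_carrier_mat[OF A] A])
  also have "\<dots> = A ^\<^sub>m Suc k * A" using Suc A by (simp add: assoc_mult_mat[OF A pow_carrier_mat[OF A] A])
  finally show ?case .
qed

lemma meval_monom:
  assumes A: "A \<in> carrier_mat n n" shows "meval A (monom c k) = c \<cdot>\<^sub>m A ^\<^sub>m k"
proof (induction k)
  case 0 then show ?case using A by (simp add: monom_0)
next
  case (Suc k)
  have "meval A (monom c (Suc k)) = A * (c \<cdot>\<^sub>m A ^\<^sub>m k)" using A Suc by (simp add: monom_Suc meval_pCons0)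
  also have "\<dots> = c \<cdot>\<^sub>m A ^\<^sub>m Suc k" using A by (simp add: mult_smult_distrib[OF A pow_carrier_mat[OF A]] pow_mat_commute[OF A])
  finally show ?case .
qed

lemma meval_X_pow:
  assumes A: "A \<in> carrier_mat n n" shows "meval A (monom 1 k) = A ^\<^sub>m k"
  using meval_monom[OF A, of 1 k] A by (simp add: smult_one_left_mat)

lemma meval_commute:
  assumes A: "A \<in> carrier_mat n n" shows "meval A p * meval A q = meval A q * meval A p"
  using meval_mult[OF A, of p q] meval_mult[OF A, of q p] by (simp add: mult.commute)

lemma dim_meval[simp]: "A \<in> carrier_mat n n \<Longrightarrow> dim_row (meval A p) = n" "A \<in> carrier_mat n n \<Longrightarrow> dim_col (meval A p) = n"
  by (metis carrier_matD meval_carrier)+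

lemma meval_pcompose:
  assumes A: "A \<in> carrier_mat n n" shows "meval A (pcompose p q) = meval (meval A q) p"
proof (induction p rule: pCons_induct)
  case 0 then show ?case using A by simp
next
  case (pCons a p)
  have B: "meval A q \<in> carrier_mat n n" using A by simp
  have "meval A (pcompose (pCons a p) q) = a \<cdot>\<^sub>m 1\<^sub>m n + meval A q * meval (meval A q) p"
    using pCons A by (simp add: pcompose_pCons meval_add meval_mult)
  also have "\<dots> = meval (meval A q) (pCons a p)" using meval_pCons[OF B] by simp
  finally show ?case .
qed

lemma A_meval_commute:
  assumes A: "A \<in> carrier_mat n n" shows "A * meval A p = meval A p * A"
proof -
  have "meval A (monom 1 1) = A" using meval_X_pow[OF A, of 1] A by (simp add: left_mult_one_mat)
  then show ?thesis using meval_commute[OF A, of "monom 1 1" p] by simp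
qed

lemma transpose_smult_mat: "transpose_mat (a \<cdot>\<^sub>m X) = a \<cdot>\<^sub>m transpose_mat X"
  by (rule eq_matI) auto

lemma meval_transpose:
  assumes A: "A \<in> carrier_mat n n" shows "meval (transpose_mat A) p = transpose_mat (meval A p)"
proof (induction p rule: pCons_induct)
  case 0 then show ?case using A by simp
next
  case (pCons a p)
  have AT: "transpose_mat A \<in> carrier_mat n n" using A by simp
  have "meval (transpose_mat A) (pCons a p) = a \<cdot>\<^sub>m 1\<^sub>m n + transpose_mat A * transpose_mat (meval A p)"
    using meval_pCons[OF AT] pCons by simp
  also have "\<dots> = a \<cdot>\<^sub>m 1\<^sub>m n + transpose_mat (meval A p * A)"
    using transpose_mult[OF meval_carrier[OF A] A] by simp
  also have "\<dots> = transpose_mat (a \<cdot>\<^sub>m 1\<^sub>m n + meval A p * A)"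
    by (subst transpose_add[of _ n n]) (auto simp: transpose_smult_mat A mult_carrier_mat[OF meval_carrier[OF A] A])
  also have "\<dots> = transpose_mat (a \<cdot>\<^sub>m 1\<^sub>m n + A * meval A p)"
    using A_meval_commute[OF A, of p] by simp
  finally show ?case using meval_pCons[OF A] by simp
qed

lemma meval_similar:
  fixes A :: "'a::field mat"
  assumes A: "A \<in> carrier_mat n n" and P: "P \<in> carrier_mat n n" and Q: "Q \<in> carrier_mat n n"
    and PQ: "P * Q = 1\<^sub>m n"
  shows "meval (Q * A * P) p = Q * meval A p * P"
proof (induction p rule: pCons_induct)
  case 0 then show ?case using A P Q
    by (simp add: right_mult_zero_mat[OF Q] left_mult_zero_mat[OF P])
next
  case (pCons a p)
  have QP: "Q * P = 1\<^sub>m n" using mat_mult_left_right_inverse[OF P Q PQ] .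
  have B: "Q * A * P \<in> carrier_mat n n" using A P Q by simp
  have E: "meval A p \<in> carrier_mat n n" using A by simp
  have "meval (Q * A * P) (pCons a p) = a \<cdot>\<^sub>m 1\<^sub>m n + (Q * A * P) * (Q * meval A p * P)"
    using meval_pCons[OF B] pCons by simp
  also have "(Q * A * P) * (Q * meval A p * P) = Q * (A * meval A p) * P"
  proof -
    have PQX: "P * (Q * X) = X" if X: "X \<in> carrier_mat n n" for X
      using PQ X P Q by (simp add: assoc_mult_mat[symmetric, of P n n Q n X n] left_mult_one_mat)
    have 1: "Q * meval A p * P = Q * (meval A p * P)" by (rule assoc_mult_mat[OF Q E P])
    have 2: "P * (Q * (meval A p * P)) = meval A p * P" by (rule PQX) (use E P in simp)
    have 3: "(Q * A * P) * (Q * (meval A p * P)) = (Q * A) * (P * (Q * (meval A p * P)))"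
      by (rule assoc_mult_mat) (use A P Q E in auto)
    have 4: "(Q * A) * (meval A p * P) = Q * (A * (meval A p * P))"
      by (rule assoc_mult_mat) (use A P Q E in auto)
    have 5: "Q * (A * meval A p) * P = Q * ((A * meval A p) * P)"
      by (rule assoc_mult_mat) (use A P Q E in auto)
    have 6: "A * (meval A p * P) = (A * meval A p) * P"
      by (rule assoc_mult_mat[symmetric]) (use A P Q E in auto)
    show ?thesis unfolding 1 3 2 4 5 6 ..
  qed
  also have "a \<cdot>\<^sub>m 1\<^sub>m n = Q * (a \<cdot>\<^sub>m 1\<^sub>m n) * P"
    using QP P Q by (simp add: mult_smult_distrib[OF Q one_carrier_mat] right_mult_one_mat[OF Q]
        mult_smult_assoc_mat[OF Q P])
  also have "Q * (a \<cdot>\<^sub>m 1\<^sub>m n) * P + Q * (A * meval A p) * P = Q * (a \<cdot>\<^sub>m 1\<^sub>m n + A * meval A p) * P"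
    unfolding mult_add_distrib_mat[OF Q smult_carrier_mat[OF one_carrier_mat] mult_carrier_mat[OF A E]]
    by (rule add_mult_distrib_mat[symmetric, of _ n n _ P n]) (use A P Q E in auto)
  finally show ?case using meval_pCons[OF A] by simp
qed

lemma meval_reflect:
  assumes A: "A \<in> carrier_mat n n" and B: "B \<in> carrier_mat n n" and AB: "A * B = 1\<^sub>m n"
  shows "A ^\<^sub>m (degree p) * meval B p = meval A (reflect_poly p)"
proof (induction p rule: pCons_induct)
  case 0 then show ?case using A B by (simp add: right_mult_zero_mat[of _ n n])
next
  case (pCons a p)
  show ?case
  proof (cases "p = 0")
    case True
    then show ?thesis using A B by (simp add: left_mult_one_mat[of _ n n])
  next
    case False
    have E: "meval B p \<in> carrier_mat n n" using B by simp
    have "A ^\<^sub>m (degree (pCons a p)) * meval B (pCons a p) = A ^\<^sub>m (Suc (degree p)) * (a \<cdot>\<^sub>m 1\<^sub>m n + B * meval B p)"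
      using False meval_pCons[OF B] by simp
    also have "\<dots> = a \<cdot>\<^sub>m A ^\<^sub>m (Suc (degree p)) + A ^\<^sub>m (Suc (degree p)) * (B * meval B p)"
    proof -
      have X: "A ^\<^sub>m (Suc (degree p)) \<in> carrier_mat n n" using A by (rule pow_carrier_mat)
      show ?thesis
        unfolding mult_add_distrib_mat[OF X smult_carrier_mat[OF one_carrier_mat] mult_carrier_mat[OF B E]]
          mult_smult_distrib[OF X one_carrier_mat] right_mult_one_mat[OF X] ..
    qed
    also have "A ^\<^sub>m (Suc (degree p)) * (B * meval B p) = A ^\<^sub>m (degree p) * meval B p"
    proof -
      have "A ^\<^sub>m (Suc (degree p)) * (B * meval B p) = A ^\<^sub>m (degree p) * (A * B) * meval B p"
        using A B E by (simp add: assoc_mult_mat[of _ n n _ n _ n])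
      then show ?thesis using AB A E by (simp add: right_mult_one_mat[of _ n n])
    qed
    also have "a \<cdot>\<^sub>m A ^\<^sub>m (Suc (degree p)) + A ^\<^sub>m (degree p) * meval B p = meval A (reflect_poly (pCons a p))"
      using False pCons A by (simp add: reflect_poly_pCons' meval_add meval_monom
        comm_add_mat[OF smult_carrier_mat[OF mult_carrier_mat[OF pow_carrier_mat[OF A] A]] meval_carrier[OF A]])
    finally show ?thesis .
  qed
qed

lemma meval_sum_vec:
  assumes A: "A \<in> carrier_mat n n" and v: "v \<in> carrier_vec n" and i: "i < n" and S: "finite S"
  shows "(meval A (\<Sum>l\<in>S. f l) *\<^sub>v v) $ i = (\<Sum>l\<in>S. (meval A (f l) *\<^sub>v v) $ i)"
  using S
proof (induction S rule: finite_induct)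
  case empty then show ?case using A v i by simp
next
  case (insert x S)
  then show ?case using A v i
    by (simp add: meval_add add_mult_distrib_mat_vec[OF meval_carrier[OF A] meval_carrier[OF A] v])
qed

lemma smult_mat_vec_index:
  assumes X: "X \<in> carrier_mat n n" and v: "v \<in> carrier_vec n" and i: "i < n"
  shows "((c \<cdot>\<^sub>m X) *\<^sub>v v) $ i = c * ((X *\<^sub>v v) $ i)"
proof -
  have "row (c \<cdot>\<^sub>m X) i = c \<cdot>\<^sub>v row X i" using X i by (intro eq_vecI) auto
  then show ?thesis using X v i by (simp, subst smult_scalar_prod_distrib[of _ n]) auto
qed

lemma meval_vec_sum:
  assumes A: "A \<in> carrier_mat n n" and v: "v \<in> carrier_vec n" and i: "i < n" and d: "degree p < N"
  shows "(meval A p *\<^sub>v v) $ i = (\<Sum>l<N. coeff p l * ((A ^\<^sub>m l *\<^sub>v v) $ i))"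
proof -
  have "p = (\<Sum>l\<le>N - 1. monom (coeff p l) l)" using d by (intro poly_as_sum_of_monoms'[symmetric]) auto
  also have "{..N - 1} = {..<N}" using d by auto
  finally have p: "p = (\<Sum>l<N. monom (coeff p l) l)" .
  show ?thesis
    by (subst p, subst meval_sum_vec[OF A v i], simp, rule sum.cong, simp,
        simp add: meval_monom[OF A] smult_mat_vec_index[OF pow_carrier_mat[OF A] v i])
qed


lemma mat_zero_by_vec:
  fixes M :: "'a::comm_ring_1 mat"
  assumes M: "M \<in> carrier_mat n n" and h: "\<And>v. v \<in> carrier_vec n \<Longrightarrow> M *\<^sub>v v = 0\<^sub>v n"
  shows "M = 0\<^sub>m n n"
proof (rule eq_matI)
  fix i j assume i: "i < dim_row (0\<^sub>m n n :: 'a mat)" and j: "j < dim_col (0\<^sub>m n n :: 'a mat)"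
  have "(M *\<^sub>v unit_vec n j) $ i = 0" using h[of "unit_vec n j"] i by simp
  then show "M $$ (i, j) = 0\<^sub>m n n $$ (i, j)" using M i j by simp
qed (use M in auto)

lemma char_poly_matrix_index:
  assumes A: "A \<in> carrier_mat n n" and i: "i < n" and l: "l < n"
  shows "char_poly_matrix A $$ (i,l) = (if i = l then [:0,1:] else 0) + [:- A $$ (i,l):]"
  using A i l unfolding char_poly_matrix_def by auto

lemma coeff_X_mult: "coeff ([:0,1:] * (q :: 'a::comm_ring_1 poly)) k = (if k = 0 then 0 else coeff q (k - 1))"
  by (cases k) (auto simp: coeff_pCons)

theorem cayley_hamilton:
  fixes A :: "'a::comm_ring_1 mat"
  assumes A: "A \<in> carrier_mat n n"
  shows "meval A (char_poly A) = 0\<^sub>m n n"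
proof -
  define g where "g = char_poly A"
  define P where "P = char_poly_matrix A"
  define Q where "Q = adj_mat P"
  have P: "P \<in> carrier_mat n n" using A unfolding P_def by simp
  have Q: "Q \<in> carrier_mat n n" using adj_mat(1)[OF P] unfolding Q_def .
  have PQ: "P * Q = g \<cdot>\<^sub>m 1\<^sub>m n" using adj_mat(2)[OF P] unfolding Q_def g_def char_poly_def P_def .
  define B where "B k = mat n n (\<lambda>(i,j). coeff (Q $$ (i,j)) k)" for k
  define D where "D k = (if k = 0 then 0\<^sub>m n n else B (k - 1))" for k
  have B: "B k \<in> carrier_mat n n" for k unfolding B_def by simp
  have D: "D k \<in> carrier_mat n n" for k unfolding D_def using B by simp
  have key: "coeff g k \<cdot>\<^sub>m 1\<^sub>m n = D k - A * B k" for k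
  proof (rule eq_matI)
    fix i j assume i: "i < dim_row (D k - A * B k)" and j: "j < dim_col (D k - A * B k)"
    then have i: "i < n" and j: "j < n" using A B[of k] by auto
    have "(P * Q) $$ (i,j) = (\<Sum>l<n. P $$ (i,l) * Q $$ (l,j))"
      using P Q i j by (simp add: scalar_prod_def lessThan_atLeast0)
    then have "coeff ((P * Q) $$ (i,j)) k = (\<Sum>l<n. coeff (P $$ (i,l) * Q $$ (l,j)) k)"
      by (simp add: coeff_sum)
    also have "\<dots> = (\<Sum>l<n. (if i = l then (if k = 0 then 0 else coeff (Q $$ (l,j)) (k - 1)) else 0)
        - A $$ (i,l) * coeff (Q $$ (l,j)) k)"
      by (rule sum.cong, simp, simp add: P_def char_poly_matrix_index[OF A i] algebra_simps coeff_pCons split: nat.split)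
    also have "\<dots> = (\<Sum>l<n. (if i = l then (if k = 0 then 0 else coeff (Q $$ (l,j)) (k - 1)) else 0))
        - (\<Sum>l<n. A $$ (i,l) * coeff (Q $$ (l,j)) k)"
      by (simp add: sum_subtractf)
    also have "(\<Sum>l<n. (if i = l then (if k = 0 then 0 else coeff (Q $$ (l,j)) (k - 1)) else 0))
       = D k $$ (i,j)"
      using i j by (simp add: D_def B_def)
    also have "(\<Sum>l<n. A $$ (i,l) * coeff (Q $$ (l,j)) k) = (A * B k) $$ (i,j)"
      using A i j by (simp add: B_def scalar_prod_def lessThan_atLeast0)
    finally have "coeff ((P * Q) $$ (i,j)) k = D k $$ (i,j) - (A * B k) $$ (i,j)" .
    moreover have "coeff ((P * Q) $$ (i,j)) k = coeff g k * (if i = j then 1 else 0)"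
      unfolding PQ using i j by simp
    ultimately show "(coeff g k \<cdot>\<^sub>m 1\<^sub>m n) $$ (i, j) = (D k - A * B k) $$ (i, j)"
      using i j A B[of k] by simp
  qed (use A B[of k] D[of k] in auto)
  define N where "N = Suc (Suc (degree g + (\<Sum>i<n. \<Sum>j<n. degree (Q $$ (i,j)))))"
  have BN: "B (N - 1) = 0\<^sub>m n n"
  proof (rule eq_matI)
    fix i j assume "i < dim_row (0\<^sub>m n n :: 'a mat)" "j < dim_col (0\<^sub>m n n :: 'a mat)"
    then have i: "i < n" and j: "j < n" by auto
    have "degree (Q $$ (i,j)) \<le> (\<Sum>j<n. degree (Q $$ (i,j)))"
      using j by (intro member_le_sum) auto
    also have "\<dots> \<le> (\<Sum>i<n. \<Sum>j<n. degree (Q $$ (i,j)))"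
      using i by (intro member_le_sum[of i "{..<n}" "\<lambda>i. \<Sum>j<n. degree (Q $$ (i,j))"]) auto
    finally have "degree (Q $$ (i,j)) < N - 1" unfolding N_def by simp
    then show "B (N - 1) $$ (i, j) = 0\<^sub>m n n $$ (i, j)"
      using i j by (simp add: B_def coeff_eq_0)
  qed (auto simp: B_def)
  have "meval A g *\<^sub>v v = 0\<^sub>v n" if v: "v \<in> carrier_vec n" for v
  proof (rule eq_vecI)
    fix i assume "i < dim_vec (0\<^sub>v n :: 'a vec)"
    then have i: "i < n" by simp
    define T where "T l = ((A ^\<^sub>m l * D l) *\<^sub>v v) $ i" for l
    have step: "coeff g l * ((A ^\<^sub>m l *\<^sub>v v) $ i) = T l - T (Suc l)" for l
    proof -
      have X: "A ^\<^sub>m l \<in> carrier_mat n n" using A by simp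
      have "coeff g l * ((A ^\<^sub>m l *\<^sub>v v) $ i) = ((A ^\<^sub>m l * (coeff g l \<cdot>\<^sub>m 1\<^sub>m n)) *\<^sub>v v) $ i"
        using X v i by (simp add: mult_smult_distrib[OF X one_carrier_mat] right_mult_one_mat[OF X]
            smult_mat_vec_index[OF X v i])
      also have "\<dots> = ((A ^\<^sub>m l * D l - A ^\<^sub>m l * (A * B l)) *\<^sub>v v) $ i"
        unfolding key mult_minus_distrib_mat[OF X D mult_carrier_mat[OF A B]] ..
      also have "\<dots> = T l - ((A ^\<^sub>m l * (A * B l)) *\<^sub>v v) $ i"
        unfolding T_def using X A B D v i
        by (subst minus_mult_distrib_mat_vec[of _ n n])
          (auto intro!: mult_carrier_mat[of _ n n _ n] X D B A)
      also have "A ^\<^sub>m l * (A * B l) = A ^\<^sub>m Suc l * D (Suc l)"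
        using X A B by (simp add: D_def assoc_mult_mat[of _ n n _ n _ n])
      finally show ?thesis unfolding T_def .
    qed
    have T0: "T 0 = 0" unfolding T_def D_def using A v i by (simp add: right_mult_zero_mat[of _ n n])
    have TN: "T N = 0" unfolding T_def D_def using A v i BN N_def
      by (simp add: right_mult_zero_mat[of _ n n])
    have "(meval A g *\<^sub>v v) $ i = (\<Sum>l<N. coeff g l * ((A ^\<^sub>m l *\<^sub>v v) $ i))"
      by (rule meval_vec_sum[OF A v i]) (simp add: N_def)
    also have "\<dots> = (\<Sum>l<N. T l - T (Suc l))" using step by simp
    also have "\<dots> = T 0 - T N" by (rule sum_lessThan_telescope')
    finally show "(meval A g *\<^sub>v v) $ i = 0\<^sub>v n $ i" using T0 TN i by simp
  qed (use A in simp)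
  then show ?thesis unfolding g_def[symmetric] by (intro mat_zero_by_vec) (use A in auto)
qed


lemma mult_mat_vec_zero_right[simp]: "A \<in> carrier_mat nr n \<Longrightarrow> A *\<^sub>v 0\<^sub>v n = (0\<^sub>v nr :: 'a::comm_ring_1 vec)"
  by (rule eq_vecI) (auto simp: scalar_prod_def)

lemma annih_dvd:
  fixes X :: "'a::field mat"
  assumes X: "X \<in> carrier_mat n n" and v: "v \<in> carrier_vec n" and v0: "v \<noteq> 0\<^sub>v n"
    and p: "irreducible p" and hp: "meval X p *\<^sub>v v = 0\<^sub>v n" and hh: "meval X h *\<^sub>v v = 0\<^sub>v n"
  shows "p dvd h"
proof -
  define S where "S = {m. m \<noteq> 0 \<and> meval X m *\<^sub>v v = 0\<^sub>v n}"
  have pS: "p \<in> S" using p hp unfolding S_def by auto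
  obtain m where mS: "m \<in> S" and mmin: "\<And>m'. m' \<in> S \<Longrightarrow> degree m \<le> degree m'"
    using ex_has_least_nat[of "\<lambda>m. m \<in> S" p degree] pS by blast
  have m0: "m \<noteq> 0" and hm: "meval X m *\<^sub>v v = 0\<^sub>v n" using mS unfolding S_def by auto
  have mdvd: "m dvd h'" if hh': "meval X h' *\<^sub>v v = 0\<^sub>v n" for h'
  proof -
    have "meval X h' = meval X ((h' div m) * m + h' mod m)" by simp
    also have "\<dots> = meval X (h' div m) * meval X m + meval X (h' mod m)"
      by (simp only: meval_add[OF X] meval_mult[OF X])
    finally have "meval X h' = meval X (h' div m) * meval X m + meval X (h' mod m)" .
    then have "meval X h' *\<^sub>v v = meval X (h' div m) *\<^sub>v (meval X m *\<^sub>v v) + meval X (h' mod m) *\<^sub>v v"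
      using X v by (simp add: add_mult_distrib_mat_vec[OF mult_carrier_mat[OF meval_carrier[OF X] meval_carrier[OF X]] meval_carrier[OF X] v]
         assoc_mult_mat_vec[OF meval_carrier[OF X] meval_carrier[OF X] v])
    then have "meval X (h' mod m) *\<^sub>v v = 0\<^sub>v n" using hh' hm X v
      by (simp add: mult_mat_vec_zero_right[OF meval_carrier[OF X]] left_zero_vec[OF mult_mat_vec_carrier[OF meval_carrier[OF X] v]])
    then have hmod: "meval X (h' mod m) *\<^sub>v v = 0\<^sub>v n" .
    have "h' mod m = 0"
    proof (rule ccontr)
      assume nz: "h' mod m \<noteq> 0"
      then have "h' mod m \<in> S" using hmod unfolding S_def by simp
      from mmin[OF this] degree_mod_less'[OF m0 nz] show False by simp
    qed
    then show ?thesis by (simp add: mod_eq_0_iff_dvd)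
  qed
  have "m dvd p" using mdvd[OF hp] .
  then obtain w where pw: "p = m * w" by (elim dvdE)
  have "\<not> is_unit m"
  proof
    assume "is_unit m"
    then have "degree m = 0" using m0 by (simp add: is_unit_iff_degree)
    then obtain c where mc: "m = [:c:]" by (metis degree_eq_zeroE)
    then have c0: "c \<noteq> 0" using m0 by auto
    have "v = 0\<^sub>v n"
    proof (rule eq_vecI)
      fix i assume "i < dim_vec (0\<^sub>v n :: 'a vec)"
      then have i: "i < n" by simp
      have "((c \<cdot>\<^sub>m 1\<^sub>m n) *\<^sub>v v) $ i = 0" using hm X i unfolding mc by simp
      then have "c * v $ i = 0" using smult_mat_vec_index[OF one_carrier_mat v i, of c] v by simp
      then show "v $ i = 0\<^sub>v n $ i" using c0 i by simp
    qed (use v in simp)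
    then show False using v0 by simp
  qed
  then have "is_unit w" using p pw by (meson irreducibleD)
  then have "p dvd m" using pw by (simp add: mult_unit_dvd_iff')
  then show ?thesis using mdvd[OF hh] by (rule dvd_trans)
qed

lemma singular_irreducible_factor:
  fixes X :: "'a::field mat"
  assumes X: "X \<in> carrier_mat n n" and n: "n > 0"
  shows "h \<noteq> 0 \<Longrightarrow> det (meval X h) = 0 \<Longrightarrow> \<exists>p. irreducible p \<and> p dvd h \<and> det (meval X p) = 0"
proof (induction "degree h" arbitrary: h rule: less_induct)
  case less
  show ?case
  proof (cases "irreducible h")
    case True then show ?thesis using less by auto
  next
    case False
    have nu: "\<not> is_unit h"
    proof
      assume "is_unit h"
      then have "degree h = 0" using less by (simp add: is_unit_iff_degree)
      then obtain c where h: "h = [:c:]" by (metis degree_eq_zeroE)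
      then have "c \<noteq> 0" using less by auto
      then have "det (meval X h) \<noteq> 0" using X h by simp
      then show False using less by simp
    qed
    from False nu less(2) obtain a b where hab: "h = a * b" and a: "\<not> is_unit a" and b: "\<not> is_unit b"
      unfolding irreducible_def by auto
    have a0: "a \<noteq> 0" and b0: "b \<noteq> 0" using hab less(2) by auto
    have da: "degree a > 0" and db: "degree b > 0" using a b a0 b0 by (auto simp: is_unit_iff_degree)
    have dh: "degree h = degree a + degree b" using hab a0 b0 by (simp add: degree_mult_eq)
    have "det (meval X a) * det (meval X b) = 0"
      using less(3) hab X by (simp add: meval_mult det_mult[OF meval_carrier[OF X] meval_carrier[OF X]])
    then have "det (meval X a) = 0 \<or> det (meval X b) = 0" by simp
    then show ?thesis
    proof
      assume "det (meval X a) = 0"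
      from less(1)[OF _ a0 this] dh db obtain p where "irreducible p" "p dvd a" "det (meval X p) = 0" by auto
      then show ?thesis using hab by (auto intro: dvd_mult_right)
    next
      assume "det (meval X b) = 0"
      from less(1)[OF _ b0 this] dh da obtain p where "irreducible p" "p dvd b" "det (meval X p) = 0" by auto
      then show ?thesis using hab by (auto intro: dvd_mult_left)
    qed
  qed
qed

lemma pow_mat_add:
  fixes A :: "'a::comm_ring_1 mat"
  assumes A: "A \<in> carrier_mat n n" shows "A ^\<^sub>m (a + b) = A ^\<^sub>m a * A ^\<^sub>m b"
  using meval_X_pow[OF A, of "a + b"] meval_X_pow[OF A, of a] meval_X_pow[OF A, of b]
    meval_mult[OF A, of "monom 1 a" "monom 1 b"] by (simp add: mult_monom)

lemma pow_mat_mult: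
  fixes A :: "'a::comm_ring_1 mat"
  assumes A: "A \<in> carrier_mat n n" shows "(A ^\<^sub>m a) ^\<^sub>m b = A ^\<^sub>m (a * b)"
proof (induction b)
  case 0 then show ?case using A by simp
next
  case (Suc b)
  then show ?case using A by (simp add: pow_mat_add[OF A, of "a * b" a, symmetric] add.commute)
qed

lemma irreducible_dvd_same_degree:
  fixes p g :: "'a::field poly"
  assumes "irreducible p" "p dvd g" "g \<noteq> 0" "degree p = degree g"
  shows "irreducible g"
proof -
  obtain u where g: "g = p * u" using assms(2) by (elim dvdE)
  have "p \<noteq> 0" "u \<noteq> 0" using g assms(3) by auto
  then have "degree u = 0" using g assms(4) by (simp add: degree_mult_eq)
  then have "is_unit u" using \<open>u \<noteq> 0\<close> by (simp add: is_unit_iff_degree)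
  then show ?thesis using g assms(1) irreducible_mult_unit_right by blast
qed


lemma zero_mat_mult_vec[simp]: "(v :: 'a::comm_ring_1 vec) \<in> carrier_vec n \<Longrightarrow> 0\<^sub>m nr n *\<^sub>v v = 0\<^sub>v nr"
  by (rule eq_vecI) (auto simp: scalar_prod_def)

theorem lemma5p1:
  fixes f :: "'a::{finite,field} poly"
    and J C_f \<alpha> :: "'a mat"
    and M k :: nat
  assumes "M \<ge> 2" and "k \<ge> 1"
    and "SRIM f" and "degree f = 2 * k"
    and "nondeg_alternating (2 * k) J"
    and "C_f \<in> symplectic_group (2 * k) J" and "char_poly C_f = f"
    and "\<alpha> \<in> symplectic_group (2 * k) J" and "\<alpha> ^\<^sub>m M = C_f"
  shows "\<exists>g. g dvd pcompose f (monom 1 M) \<and> SRIM g \<and> degree g = 2 * k"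
proof -
  define n where "n = 2 * k"
  have n0: "n > 0" and n2: "n \<ge> 2" using assms(2) unfolding n_def by auto
  have Jc: "J \<in> carrier_mat n n" and detJ: "det J \<noteq> 0"
    using assms(5) unfolding nondeg_alternating_def n_def by auto
  have ac: "\<alpha> \<in> carrier_mat n n" and aJ: "transpose_mat \<alpha> * J * \<alpha> = J"
    using assms(8) unfolding symplectic_group_def n_def by auto
  have Cc: "C_f \<in> carrier_mat n n" using assms(6) unfolding symplectic_group_def n_def by auto
  have Ca: "C_f = \<alpha> ^\<^sub>m M" using assms(9) by simp
  have firr: "irreducible f" using assms(3) unfolding SRIM_def by auto
  have degf: "degree f = n" using assms(4) unfolding n_def .
  define g where "g = char_poly \<alpha>"
  have degg: "degree g = n" and cg: "coeff g n = 1"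
    using degree_monic_char_poly[OF ac] unfolding g_def by auto
  have g0: "g \<noteq> 0" using cg by auto
  have monic: "monic g" using degg cg by simp
  have CHa: "meval \<alpha> g = 0\<^sub>m n n" unfolding g_def by (rule cayley_hamilton[OF ac])
  have CHC: "meval C_f f = 0\<^sub>m n n" using cayley_hamilton[OF Cc] assms(7) by simp
  define e where "e = (unit_vec n 0 :: 'a vec)"
  have ec: "e \<in> carrier_vec n" unfolding e_def by simp
  have e0: "e \<noteq> 0\<^sub>v n"
  proof
    assume "e = 0\<^sub>v n"
    then have "e $ 0 = 0" using n0 by simp
    then show False unfolding e_def using n0 by simp
  qed
  have "det (meval \<alpha> g) = 0" using CHa n0 by simp
  from singular_irreducible_factor[OF ac n0 g0 this]
  obtain p where pirr: "irreducible p" and pg: "p dvd g" and pdet: "det (meval \<alpha> p) = 0" by auto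
  obtain v where v: "v \<in> carrier_vec n" and v0: "v \<noteq> 0\<^sub>v n" and pv: "meval \<alpha> p *\<^sub>v v = 0\<^sub>v n"
    using pdet det_0_iff_vec_prod_zero_field[OF meval_carrier[OF ac]] by auto
  have p0: "p \<noteq> 0" using pirr by auto
  have dp: "n \<le> degree p"
  proof (rule ccontr)
    assume "\<not> n \<le> degree p"
    then have dpn: "degree p < n" by simp
    define r where "r j = monom 1 (M * j) mod p" for j
    have rdeg: "degree (r j) < n" for j
    proof (cases "r j = 0")
      case True then show ?thesis using n0 by simp
    next
      case False then show ?thesis using degree_mod_less'[OF p0, of "monom 1 (M * j)"] dpn unfolding r_def by simp
    qed
    have rco: "coeff (r j) (n - 1) = 0" for j
    proof (cases "r j = 0")
      case True then show ?thesis by simp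
    next
      case False then show ?thesis using degree_mod_less'[OF p0, of "monom 1 (M * j)"] dpn unfolding r_def
        by (intro coeff_eq_0) simp
    qed
    have Cj: "C_f ^\<^sub>m j *\<^sub>v v = meval \<alpha> (r j) *\<^sub>v v" for j
    proof -
      let ?q = "monom 1 (M * j) div p"
      have "C_f ^\<^sub>m j = meval \<alpha> (monom 1 (M * j))" unfolding Ca
        by (simp add: pow_mat_mult[OF ac] meval_X_pow[OF ac])
      also have "\<dots> = meval \<alpha> (?q * p + r j)" unfolding r_def by simp
      also have "\<dots> = meval \<alpha> ?q * meval \<alpha> p + meval \<alpha> (r j)"
        by (simp only: meval_add[OF ac] meval_mult[OF ac])
      finally have "C_f ^\<^sub>m j *\<^sub>v v = meval \<alpha> ?q *\<^sub>v (meval \<alpha> p *\<^sub>v v) + meval \<alpha> (r j) *\<^sub>v v"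
        using ac v by (simp add: add_mult_distrib_mat_vec[OF mult_carrier_mat[OF meval_carrier[OF ac] meval_carrier[OF ac]] meval_carrier[OF ac] v]
         assoc_mult_mat_vec[OF meval_carrier[OF ac] meval_carrier[OF ac] v])
      then show ?thesis unfolding pv using ac v
        by (simp add: mult_mat_vec_zero_right[OF meval_carrier[OF ac]] left_zero_vec[OF mult_mat_vec_carrier[OF meval_carrier[OF ac] v]])
    qed
    define R where "R = mat n n (\<lambda>(l,j). coeff (r j) l)"
    have Rc: "R \<in> carrier_mat n n" unfolding R_def by simp
    have "transpose_mat R *\<^sub>v unit_vec n (n - 1) = 0\<^sub>v n"
    proof (rule eq_vecI)
      fix j assume "j < dim_vec (0\<^sub>v n :: 'a vec)"
      then have j: "j < n" by simp
      have "(transpose_mat R *\<^sub>v unit_vec n (n - 1)) $ j = row (transpose_mat R) j $ (n - 1)"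
        using j Rc n0 by simp
      also have "\<dots> = coeff (r j) (n - 1)" using j Rc n0 unfolding R_def by simp
      finally show "(transpose_mat R *\<^sub>v unit_vec n (n - 1)) $ j = 0\<^sub>v n $ j" using rco j by simp
    qed (use Rc in simp)
    moreover have "unit_vec n (n - 1) \<noteq> (0\<^sub>v n :: 'a vec)"
    proof
      assume "unit_vec n (n - 1) = (0\<^sub>v n :: 'a vec)"
      then have "unit_vec n (n - 1) $ (n - 1) = (0 :: 'a)" using n0 by simp
      then show False using n0 by simp
    qed
    moreover have RT: "transpose_mat R \<in> carrier_mat n n" using Rc by simp
    ultimately have "det (transpose_mat R) = 0"
      using det_0_iff_vec_prod_zero_field[OF RT] unit_vec_carrier[of n "n - 1"] by blast
    then have "det R = 0" using det_transpose[OF Rc] by simp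
    then obtain c where c: "c \<in> carrier_vec n" and c0: "c \<noteq> 0\<^sub>v n" and Rcv: "R *\<^sub>v c = 0\<^sub>v n"
      using det_0_iff_vec_prod_zero_field[OF Rc] by auto
    define h where "h = (\<Sum>j<n. monom (c $ j) j)"
    have hco: "coeff h l = (if l < n then c $ l else 0)" for l
      unfolding h_def by (simp add: coeff_sum coeff_monom)
    obtain j where j: "j < n" and cj: "c $ j \<noteq> 0"
    proof -
      have "\<exists>j<n. c $ j \<noteq> 0"
      proof (rule ccontr)
        assume "\<not> ?thesis"
        then have "c = 0\<^sub>v n" using c by (intro eq_vecI) auto
        then show False using c0 by simp
      qed
      then show ?thesis using that by auto
    qed
    have h0: "h \<noteq> 0" using hco[of j] j cj by auto
    have hdeg: "degree h < n"
    proof -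
      have "degree h \<le> n - 1" by (rule degree_le) (use hco n0 in auto)
      then show ?thesis using n0 by simp
    qed
    have "meval C_f h *\<^sub>v v = 0\<^sub>v n"
    proof (rule eq_vecI)
      fix i assume "i < dim_vec (0\<^sub>v n :: 'a vec)"
      then have i: "i < n" by simp
      have "(meval C_f h *\<^sub>v v) $ i = (\<Sum>j<n. coeff h j * ((C_f ^\<^sub>m j *\<^sub>v v) $ i))"
        by (rule meval_vec_sum[OF Cc v i hdeg])
      also have "\<dots> = (\<Sum>j<n. c $ j * (\<Sum>l<n. coeff (r j) l * ((\<alpha> ^\<^sub>m l *\<^sub>v v) $ i)))"
        by (rule sum.cong, simp, simp add: hco Cj meval_vec_sum[OF ac v i rdeg])
      also have "\<dots> = (\<Sum>l<n. (\<Sum>j<n. c $ j * (coeff (r j) l * ((\<alpha> ^\<^sub>m l *\<^sub>v v) $ i))))"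
        unfolding sum_distrib_left by (rule sum.swap)
      also have "\<dots> = (\<Sum>l<n. ((\<alpha> ^\<^sub>m l *\<^sub>v v) $ i) * (R *\<^sub>v c) $ l)"
      proof (rule sum.cong)
        fix l assume l: "l \<in> {..<n}"
        have "(R *\<^sub>v c) $ l = (\<Sum>j<n. coeff (r j) l * c $ j)"
          using l c Rc unfolding R_def by (simp add: scalar_prod_def lessThan_atLeast0)
        then show "(\<Sum>j<n. c $ j * (coeff (r j) l * ((\<alpha> ^\<^sub>m l *\<^sub>v v) $ i))) = ((\<alpha> ^\<^sub>m l *\<^sub>v v) $ i) * (R *\<^sub>v c) $ l"
          by (simp add: sum_distrib_left ac_simps)
      qed simp
      also have "\<dots> = 0" using Rcv by simp
      finally show "(meval C_f h *\<^sub>v v) $ i = 0\<^sub>v n $ i" using i by simp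
    qed (use Cc in simp)
    moreover have "meval C_f f *\<^sub>v v = 0\<^sub>v n" using CHC v by simp
    ultimately have "f dvd h" using annih_dvd[OF Cc v v0 firr] by blast
    then have "degree f \<le> degree h" using h0 by (rule dvd_imp_degree_le)
    then show False using degf hdeg by simp
  qed
  have "degree p \<le> degree g" using pg g0 by (rule dvd_imp_degree_le)
  then have "degree p = degree g" using dp degg by simp
  then have girr: "irreducible g" using irreducible_dvd_same_degree[OF pirr pg g0] by simp
  have ge: "meval \<alpha> g *\<^sub>v e = 0\<^sub>v n" using CHa ec by simp
  have "meval \<alpha> (pcompose f (monom 1 M)) = 0\<^sub>m n n"
    using CHC by (simp add: meval_pcompose[OF ac] meval_X_pow[OF ac] Ca)
  then have dvd: "g dvd pcompose f (monom 1 M)"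
    using annih_dvd[OF ac ec e0 girr ge] ec by simp
  have c0: "coeff g 0 \<noteq> 0"
  proof
    assume "coeff g 0 = 0"
    then have "[:0,1:] dvd g" by (simp add: dvd_iff_poly_eq_0 poly_0_coeff_0)
    then obtain u where gu: "g = [:0,1:] * u" by (elim dvdE)
    have "\<not> is_unit ([:0,1:] :: 'a poly)" by (simp add: is_unit_iff_degree)
    then have "is_unit u" using girr gu by (meson irreducibleD)
    then have "degree u = 0" by (metis is_unit_iff_degree not_is_unit_0)
    then have "degree g = 1" using gu g0 by (auto simp: degree_mult_eq)
    then show False using degg n2 by simp
  qed
  have "J \<in> Units (ring_mat TYPE('a) n ())" by (rule det_non_zero_imp_unit[OF Jc detJ])
  then obtain Ji where Ji: "Ji \<in> carrier_mat n n" and JiJ: "Ji * J = 1\<^sub>m n" and JJi: "J * Ji = 1\<^sub>m n"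
    unfolding Units_def by (auto simp: ring_mat_simps)
  define \<beta> where "\<beta> = Ji * transpose_mat \<alpha> * J"
  have aT: "transpose_mat \<alpha> \<in> carrier_mat n n" using ac by simp
  have bc: "\<beta> \<in> carrier_mat n n" unfolding \<beta>_def using Ji aT Jc by simp
  have ba: "\<beta> * \<alpha> = 1\<^sub>m n"
  proof -
    have "\<beta> * \<alpha> = Ji * (transpose_mat \<alpha> * J * \<alpha>)"
      unfolding \<beta>_def using Ji aT Jc ac by (simp add: assoc_mult_mat[of _ n n _ n _ n])
    then show ?thesis using aJ JiJ by simp
  qed
  have ab: "\<alpha> * \<beta> = 1\<^sub>m n" by (rule mat_mult_left_right_inverse[OF bc ac ba])
  have "meval \<beta> g = Ji * meval (transpose_mat \<alpha>) g * J"
    unfolding \<beta>_def by (rule meval_similar[OF aT Jc Ji JJi])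
  also have "\<dots> = 0\<^sub>m n n" using CHa Ji Jc ac
    by (simp add: meval_transpose[OF ac] right_mult_zero_mat[of _ n n] left_mult_zero_mat[of _ n n])
  finally have bg: "meval \<beta> g = 0\<^sub>m n n" .
  have "meval \<alpha> (reflect_poly g) = \<alpha> ^\<^sub>m (degree g) * meval \<beta> g"
    using meval_reflect[OF ac bc ab, of g] by simp
  also have "\<dots> = 0\<^sub>m n n" unfolding bg using ac by (simp add: right_mult_zero_mat[of _ n n])
  finally have "meval \<alpha> (reflect_poly g) *\<^sub>v e = 0\<^sub>v n" using ec by simp
  then have "g dvd reflect_poly g" using annih_dvd[OF ac ec e0 girr ge] by simp
  then obtain u where ru: "reflect_poly g = g * u" by (elim dvdE)
  have u0: "u \<noteq> 0" using ru g0 by auto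
  have "degree (reflect_poly g) = degree g" using c0 by simp
  then have "degree u = 0" using ru g0 u0 by (simp add: degree_mult_eq)
  then obtain a where ua: "u = [:a:]" by (metis degree_eq_zeroE)
  have "lead_coeff (reflect_poly g) = coeff g 0"
    using c0 by (simp add: coeff_reflect_poly)
  moreover have "lead_coeff (reflect_poly g) = a" unfolding ru ua using monic by (simp add: lead_coeff_mult)
  ultimately have a: "a = coeff g 0" by simp
  have "reflect_poly g = Polynomial.smult (coeff g 0) g" unfolding ru ua a by simp
  then have "reciprocal_poly g = g" unfolding reciprocal_poly_def using c0 by simp
  then have "SRIM g" unfolding SRIM_def self_reciprocal_def using monic girr c0 by simp
  then show ?thesis using dvd degg unfolding n_def by auto
qed

end
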